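(* Let $A$ be a finite alphabet, $M$ a finite monoid, $\alpha: A^*\to M$ a monoid morphism, $S=\alpha(A^+)$, and let $B$, $\beta$ and well-formed words be as defined in the context. There exists a map $\eta: A^* \to B^*$ such that: (1) for every $w \in A^*$, $\eta(w)$ is well-formed and $\alpha(w) = \beta(\eta(w))$; (2) for every language $K \subseteq B^*$ definable in $\mathrm{FO}^2(<)$, the language $\eta^{-1}(K) \subseteq A^*$ is definable in $\mathrm{FO}^2(<,+1)$.
   Context: $E(S)$ denotes the set of idempotents of $S$, and $\square$ is a fresh symbol not in $M$. The alphabet $B$ is $\{(e,s,f) \mid e,f \in E(S)\cup\{\square\},\ s \in M\}$. The monoid morphism $\beta: B^* \to M$ is defined on letters by $\beta((e,s,f)) = esf$, $\beta((\square,s,f)) = sf$, $\beta((e,s,\square)) = es$ and $\beta((\square,s,\square)) = s$ for $e,f\in E(S)$, $s \in M$. A word $u = (e_0,s_0,f_0)\cdots(e_n,s_n,f_n) \in B^*$ is well-formed if it is nonempty, $e_0 = f_n = \square$, and for all $i < n$, $f_i = e_{i+1} \in E(S)$. Words are logical structures whose domain is the set of positions, with unary letter predicates $P_a$, the order $<$ and the successor $+1$; $\mathrm{FO}^2(<)$ (resp. $\mathrm{FO}^2(<,+1)$) is the set of first-order formulas using the letter predicates and $<$ (resp. $<$ and $+1$) with only two reusable variable names; a language is definable if it is the set of words satisfying such a sentence. The map $\eta$ need not be a morphism. *)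

theory Defs
  imports Main
begin

datatype fo2var = VX | VY

datatype 'c fo2 =
    Letter 'c fo2var
  | Less fo2var fo2var
  | Succ fo2var fo2var
  | Eq fo2var fo2var
  | Neg "'c fo2"
  | Or "'c fo2" "'c fo2"
  | And "'c fo2" "'c fo2"
  | Exists fo2var "'c fo2"

fun sat :: "'c list \<Rightarrow> (fo2var \<Rightarrow> nat) \<Rightarrow> 'c fo2 \<Rightarrow> bool" where
  "sat w \<sigma> (Letter a x) = (\<sigma> x < length w \<and> w ! (\<sigma> x) = a)"
| "sat w \<sigma> (Less x y) = (\<sigma> x < \<sigma> y)"
| "sat w \<sigma> (Succ x y) = (\<sigma> y = \<sigma> x + 1)"
| "sat w \<sigma> (Eq x y) = (\<sigma> x = \<sigma> y)"
| "sat w \<sigma> (Neg \<phi>) = (\<not> sat w \<sigma> \<phi>)"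
| "sat w \<sigma> (Or \<phi> \<psi>) = (sat w \<sigma> \<phi> \<or> sat w \<sigma> \<psi>)"
| "sat w \<sigma> (And \<phi> \<psi>) = (sat w \<sigma> \<phi> \<and> sat w \<sigma> \<psi>)"
| "sat w \<sigma> (Exists x \<phi>) = (\<exists>i < length w. sat w (\<sigma>(x := i)) \<phi>)"

fun fv :: "'c fo2 \<Rightarrow> fo2var set" where
  "fv (Letter a x) = {x}"
| "fv (Less x y) = {x, y}"
| "fv (Succ x y) = {x, y}"
| "fv (Eq x y) = {x, y}"
| "fv (Neg \<phi>) = fv \<phi>"
| "fv (Or \<phi> \<psi>) = fv \<phi> \<union> fv \<psi>"
| "fv (And \<phi> \<psi>) = fv \<phi> \<union> fv \<psi>"
| "fv (Exists x \<phi>) = fv \<phi> - {x}"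

fun letters :: "'c fo2 \<Rightarrow> 'c set" where
  "letters (Letter a x) = {a}"
| "letters (Less x y) = {}"
| "letters (Succ x y) = {}"
| "letters (Eq x y) = {}"
| "letters (Neg \<phi>) = letters \<phi>"
| "letters (Or \<phi> \<psi>) = letters \<phi> \<union> letters \<psi>"
| "letters (And \<phi> \<psi>) = letters \<phi> \<union> letters \<psi>"
| "letters (Exists x \<phi>) = letters \<phi>"

fun no_succ :: "'c fo2 \<Rightarrow> bool" where
  "no_succ (Succ x y) = False"
| "no_succ (Neg \<phi>) = no_succ \<phi>"
| "no_succ (Or \<phi> \<psi>) = (no_succ \<phi> \<and> no_succ \<psi>)"
| "no_succ (And \<phi> \<psi>) = (no_succ \<phi> \<and> no_succ \<psi>)"
| "no_succ (Exists x \<phi>) = no_succ \<phi>"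
| "no_succ _ = True"

definition sentence :: "'c set \<Rightarrow> 'c fo2 \<Rightarrow> bool" where
  "sentence \<Sigma> \<phi> \<longleftrightarrow> fv \<phi> = {} \<and> letters \<phi> \<subseteq> \<Sigma>"

text \<open>Language over alphabet \<Sigma> defined by a sentence (assignment irrelevant).\<close>
definition lang :: "'c set \<Rightarrow> 'c fo2 \<Rightarrow> 'c list set" where
  "lang \<Sigma> \<phi> = {w \<in> lists \<Sigma>. sat w (\<lambda>_. 0) \<phi>}"

definition FO2_lt_definable :: "'c set \<Rightarrow> 'c list set \<Rightarrow> bool" where
  "FO2_lt_definable \<Sigma> L \<longleftrightarrow> (\<exists>\<phi>. sentence \<Sigma> \<phi> \<and> no_succ \<phi> \<and> L = lang \<Sigma> \<phi>)"

definition FO2_lt_succ_definable :: "'c set \<Rightarrow> 'c list set \<Rightarrow> bool" where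
  "FO2_lt_succ_definable \<Sigma> L \<longleftrightarrow> (\<exists>\<phi>. sentence \<Sigma> \<phi> \<and> L = lang \<Sigma> \<phi>)"

definition monoid_morphism :: "('a list \<Rightarrow> 'm::monoid_mult) \<Rightarrow> bool" where
  "monoid_morphism \<alpha> \<longleftrightarrow> \<alpha> [] = 1 \<and> (\<forall>u v. \<alpha> (u @ v) = \<alpha> u * \<alpha> v)"

definition semigroup_S :: "('a list \<Rightarrow> 'm::monoid_mult) \<Rightarrow> 'm set" where
  "semigroup_S \<alpha> = \<alpha> ` {w. w \<noteq> []}"

definition idempotents :: "'m::monoid_mult set \<Rightarrow> 'm set" where
  "idempotents S = {e \<in> S. e * e = e}"

text \<open>Letters of B are triples (e,s,f); the fresh symbol \<box> is encoded as None.\<close>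
type_synonym 'm bletter = "'m option \<times> 'm \<times> 'm option"

definition Bset :: "('a list \<Rightarrow> 'm::monoid_mult) \<Rightarrow> 'm bletter set" where
  "Bset \<alpha> = {(e, s, f). e \<in> insert None (Some ` idempotents (semigroup_S \<alpha>))
                        \<and> f \<in> insert None (Some ` idempotents (semigroup_S \<alpha>))}"

fun beta_letter :: "'m::monoid_mult bletter \<Rightarrow> 'm" where
  "beta_letter (Some e, s, Some f) = e * s * f"
| "beta_letter (None, s, Some f) = s * f"
| "beta_letter (Some e, s, None) = e * s"
| "beta_letter (None, s, None) = s"

definition beta :: "'m::monoid_mult bletter list \<Rightarrow> 'm" where
  "beta u = prod_list (map beta_letter u)"

definition well_formed :: "('a list \<Rightarrow> 'm::monoid_mult) \<Rightarrow> 'm bletter list \<Rightarrow> bool" where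
  "well_formed \<alpha> u \<longleftrightarrow> u \<noteq> [] \<and> fst (u ! 0) = None \<and> snd (snd (u ! (length u - 1))) = None
     \<and> (\<forall>i < length u - 1. snd (snd (u ! i)) = fst (u ! (i + 1))
            \<and> snd (snd (u ! i)) \<in> Some ` idempotents (semigroup_S \<alpha>))"

end

theory Submission
  imports Defs
begin



fun other :: "fo2var \<Rightarrow> fo2var" where "other VX = VY" | "other VY = VX"

lemma other_neq[simp]: "other z \<noteq> z" by (cases z) auto

fun walkF :: "fo2var \<Rightarrow> nat \<Rightarrow> (fo2var \<Rightarrow> 'c fo2) \<Rightarrow> 'c fo2" where
  "walkF z 0 P = P z"
| "walkF z (Suc k) P = Exists (other z) (And (Succ z (other z)) (walkF (other z) k P))"

fun walkB :: "fo2var \<Rightarrow> nat \<Rightarrow> (fo2var \<Rightarrow> 'c fo2) \<Rightarrow> 'c fo2" where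
  "walkB z 0 P = P z"
| "walkB z (Suc k) P = Exists (other z) (And (Succ (other z) z) (walkB (other z) k P))"

lemma walkF_sat:
  assumes "\<And>\<sigma> v. sat w \<sigma> (P v) = Q (\<sigma> v)"
  shows "\<sigma> z < length w \<Longrightarrow> sat w \<sigma> (walkF z k P) = (\<sigma> z + k < length w \<and> Q (\<sigma> z + k))"
proof (induction k arbitrary: z \<sigma>)
  case 0 then show ?case by (simp add: assms)
next
  case (Suc k)
  have "sat w \<sigma> (walkF z (Suc k) P) = (\<exists>i<length w. i = \<sigma> z + 1 \<and> sat w (\<sigma>(other z := i)) (walkF (other z) k P))"
    by (auto simp: other_neq[of z, symmetric])
  also have "\<dots> = (\<exists>i<length w. i = \<sigma> z + 1 \<and> (i + k < length w \<and> Q (i + k)))"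
    by (rule iffI; clarsimp; (subst (asm) Suc.IH | subst Suc.IH); simp)
  also have "\<dots> = (\<sigma> z + Suc k < length w \<and> Q (\<sigma> z + Suc k))" by auto
  finally show ?case .
qed

lemma walkB_sat:
  assumes "\<And>\<sigma> v. sat w \<sigma> (P v) = Q (\<sigma> v)"
  shows "\<sigma> z < length w \<Longrightarrow> sat w \<sigma> (walkB z k P) = (k \<le> \<sigma> z \<and> Q (\<sigma> z - k))"
proof (induction k arbitrary: z \<sigma>)
  case 0 then show ?case by (simp add: assms)
next
  case (Suc k)
  have "sat w \<sigma> (walkB z (Suc k) P) = (\<exists>i<length w. \<sigma> z = i + 1 \<and> sat w (\<sigma>(other z := i)) (walkB (other z) k P))"
    by (auto simp: other_neq[of z, symmetric])
  also have "\<dots> = (\<exists>i<length w. \<sigma> z = i + 1 \<and> (k \<le> i \<and> Q (i - k)))"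
    by (rule iffI; clarsimp; (subst (asm) Suc.IH | subst Suc.IH); simp)
  also have "\<dots> = (Suc k \<le> \<sigma> z \<and> Q (\<sigma> z - Suc k))" using Suc.prems
    by (auto intro!: exI[of _ "\<sigma> z - 1"])
  finally show ?case .
qed

lemma fv_walkF: "(\<And>v. fv (P v) \<subseteq> {v}) \<Longrightarrow> fv (walkF z k P) \<subseteq> {z}"
  by (induction k arbitrary: z) (fastforce)+

lemma fv_walkB: "(\<And>v. fv (P v) \<subseteq> {v}) \<Longrightarrow> fv (walkB z k P) \<subseteq> {z}"
  by (induction k arbitrary: z) (fastforce)+

definition get :: "'a list \<Rightarrow> int \<Rightarrow> 'a option" where
  "get w p = (if 0 \<le> p \<and> p < int (length w) then Some (w ! nat p) else None)"

definition chk :: "fo2var \<Rightarrow> int \<Rightarrow> 'a option \<Rightarrow> 'a fo2" where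
  "chk z d ov = (if 0 \<le> d then
       (case ov of None \<Rightarrow> Neg (walkF z (nat d) (\<lambda>v. Eq v v)) | Some c \<Rightarrow> walkF z (nat d) (\<lambda>v. Letter c v))
     else (case ov of None \<Rightarrow> Neg (walkB z (nat (-d)) (\<lambda>v. Eq v v)) | Some c \<Rightarrow> walkB z (nat (-d)) (\<lambda>v. Letter c v)))"

lemma walkF_T: "\<sigma> z < length w \<Longrightarrow> sat w \<sigma> (walkF z k (\<lambda>v. Eq v v)) = (\<sigma> z + k < length w)"
  using walkF_sat[where w=w and P="\<lambda>v. Eq v v" and Q="\<lambda>_. True"] by simp
lemma walkF_L: "\<sigma> z < length w \<Longrightarrow> sat w \<sigma> (walkF z k (\<lambda>v. Letter c v)) = (\<sigma> z + k < length w \<and> w ! (\<sigma> z + k) = c)"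
  using walkF_sat[where w=w and P="\<lambda>v. Letter c v" and Q="\<lambda>p. p < length w \<and> w ! p = c"] by simp
lemma walkB_T: "\<sigma> z < length w \<Longrightarrow> sat w \<sigma> (walkB z k (\<lambda>v. Eq v v)) = (k \<le> \<sigma> z)"
  using walkB_sat[where w=w and P="\<lambda>v. Eq v v" and Q="\<lambda>_. True"] by simp
lemma walkB_L: "\<sigma> z < length w \<Longrightarrow> sat w \<sigma> (walkB z k (\<lambda>v. Letter c v)) = (k \<le> \<sigma> z \<and> w ! (\<sigma> z - k) = c)"
  using walkB_sat[where w=w and P="\<lambda>v. Letter c v" and Q="\<lambda>p. p < length w \<and> w ! p = c"] by force

lemma chk_sat: assumes "\<sigma> z < length w"
  shows "sat w \<sigma> (chk z d ov) = (get w (int (\<sigma> z) + d) = ov)"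
proof (cases "0 \<le> d")
  case True
  then show ?thesis
    using assms
    by (cases ov) (auto simp: chk_def get_def nat_add_distrib walkF_T walkF_L)
next
  case False
  have e: "nat (int (\<sigma> z) + d) = \<sigma> z - nat (- d)" if "0 \<le> int (\<sigma> z) + d" using that False by linarith
  show ?thesis
    using assms False e
    by (cases ov) (auto simp: chk_def get_def nat_diff_distrib' nat_add_distrib walkB_T walkB_L)
qed

lemma fv_chk: "fv (chk z d ov) \<subseteq> {z}"
  unfolding chk_def by (auto split: option.splits dest!: set_mp[OF fv_walkF, rotated] set_mp[OF fv_walkB, rotated])

fun ands :: "fo2var \<Rightarrow> 'c fo2 list \<Rightarrow> 'c fo2" where
  "ands z [] = Eq z z" | "ands z (\<phi> # \<phi>s) = And \<phi> (ands z \<phi>s)"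
fun ors :: "'c fo2 \<Rightarrow> 'c fo2 list \<Rightarrow> 'c fo2" where
  "ors b [] = b" | "ors b (\<phi> # \<phi>s) = Or \<phi> (ors b \<phi>s)"

lemma sat_ands: "sat w \<sigma> (ands z \<phi>s) = (\<forall>\<phi>\<in>set \<phi>s. sat w \<sigma> \<phi>)"
  by (induction \<phi>s) auto
lemma sat_ors: "sat w \<sigma> (ors b \<phi>s) = (sat w \<sigma> b \<or> (\<exists>\<phi>\<in>set \<phi>s. sat w \<sigma> \<phi>))"
  by (induction \<phi>s) auto
lemma fv_ands: "(\<forall>\<phi>\<in>set \<phi>s. fv \<phi> \<subseteq> {z}) \<Longrightarrow> fv (ands z \<phi>s) \<subseteq> {z}"
  by (induction \<phi>s) auto
lemma fv_ors: "(\<forall>\<phi>\<in>set \<phi>s. fv \<phi> \<subseteq> X) \<Longrightarrow> fv b \<subseteq> X \<Longrightarrow> fv (ors b \<phi>s) \<subseteq> X"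
  by (induction \<phi>s) auto

fun trans :: "('c \<Rightarrow> fo2var \<Rightarrow> 'a fo2) \<Rightarrow> 'c fo2 \<Rightarrow> 'a fo2" where
  "trans L (Letter c x) = L c x"
| "trans L (Less x y) = Less x y"
| "trans L (Succ x y) = Succ x y"
| "trans L (Eq x y) = Eq x y"
| "trans L (Neg \<phi>) = Neg (trans L \<phi>)"
| "trans L (Or \<phi> \<psi>) = Or (trans L \<phi>) (trans L \<psi>)"
| "trans L (And \<phi> \<psi>) = And (trans L \<phi>) (trans L \<psi>)"
| "trans L (Exists x \<phi>) = Exists x (trans L \<phi>)"

lemma fv_trans: "(\<And>c x. fv (L c x) \<subseteq> {x}) \<Longrightarrow> fv (trans L \<phi>) \<subseteq> fv \<phi>"
  by (induction \<phi>) auto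

lemma trans_sat:
  assumes len: "length u = length w"
    and L: "\<And>c x \<sigma>. \<sigma> x < length w \<Longrightarrow> sat w \<sigma> (L c x) = (u ! \<sigma> x = c)"
  shows "(\<forall>x\<in>fv \<phi>. \<sigma> x < length w) \<Longrightarrow> sat w \<sigma> (trans L \<phi>) = sat u \<sigma> \<phi>"
proof (induction \<phi> arbitrary: \<sigma>)
  case (Letter c x) then show ?case using L len by auto
next
  case (Exists x \<phi>)
  have "sat w (\<sigma>(x := i)) (trans L \<phi>) = sat u (\<sigma>(x := i)) \<phi>" if "i < length w" for i
    using Exists.prems that by (intro Exists.IH) auto
  then show ?case using len by auto
qed auto

definition exact :: "'a list \<Rightarrow> 'a fo2" where
  "exact u = (if u = [] then Neg (Exists VX (Eq VX VX)) else
     Exists VX (ands VX ([chk VX (-1) None, chk VX (int (length u)) None] @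
        map (\<lambda>k. chk VX (int k) (Some (u ! k))) [0..<length u])))"

lemma fv_exact: "fv (exact u) = {}"
proof -
  have "fv (ands VX ([chk VX (-1) None, chk VX (int (length u)) None] @
        map (\<lambda>k. chk VX (int k) (Some (u ! k))) [0..<length u])) \<subseteq> {VX}"
    by (rule fv_ands) (auto dest: set_mp[OF fv_chk])
  then show ?thesis unfolding exact_def by auto
qed

lemma sat_exact: "sat w \<sigma> (exact u) = (w = u)"
proof (cases "u = []")
  case True then show ?thesis by (auto simp: exact_def)
next
  case False
  have "sat w \<sigma> (exact u) = (\<exists>i<length w. get w (int i - 1) = None \<and> get w (int i + int (length u)) = None
     \<and> (\<forall>k<length u. get w (int i + int k) = Some (u ! k)))"
    using False by (auto simp: exact_def sat_ands chk_sat)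
  also have "\<dots> = (w = u)"
  proof
    assume "\<exists>i<length w. get w (int i - 1) = None \<and> get w (int i + int (length u)) = None
     \<and> (\<forall>k<length u. get w (int i + int k) = Some (u ! k))"
    then obtain i where i: "i < length w" "get w (int i - 1) = None" "get w (int i + int (length u)) = None"
      "\<forall>k<length u. get w (int i + int k) = Some (u ! k)" by blast
    from i(1,2) have i0: "i = 0" by (auto simp: get_def split: if_splits)
    from i(3) i0 have l1: "length w \<le> length u" by (auto simp: get_def split: if_splits)
    from i(4) i0 False have "get w (int (length u - 1)) = Some (u ! (length u - 1))" by simp
    then have l2: "length u \<le> length w" by (auto simp: get_def split: if_splits)
    show "w = u"
    proof (rule nth_equalityI)
      show "length w = length u" using l1 l2 by simp
      fix k assume "k < length w"
      then show "w ! k = u ! k" using i(4) i0 l1 by (auto simp: get_def split: if_splits)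
    qed
  next
    assume "w = u"
    then show "\<exists>i<length w. get w (int i - 1) = None \<and> get w (int i + int (length u)) = None
     \<and> (\<forall>k<length u. get w (int i + int k) = Some (u ! k))"
      using False by (auto simp: get_def intro!: exI[of _ 0])
  qed
  finally show ?thesis .
qed

definition geq :: "nat \<Rightarrow> 'a fo2" where
  "geq m = Exists VX (walkF VX (m - 1) (\<lambda>v. Eq v v))"

lemma sat_geq: assumes "1 \<le> m" shows "sat w \<sigma> (geq m) = (m \<le> length w)"
proof -
  have "sat w \<sigma> (geq m) = (\<exists>i<length w. i + (m - 1) < length w)"
    unfolding geq_def by (auto simp: walkF_T)
  then show ?thesis using assms by (auto intro!: exI[of _ 0])
qed

lemma fv_geq: "fv (geq m) = {}"
  using fv_walkF[of "\<lambda>v. Eq v v" VX "m - 1"] by (auto simp: geq_def)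

definition ffalse :: "'a fo2" where "ffalse = Exists VX (Neg (Eq VX VX))"
lemma sat_ffalse[simp]: "sat w \<sigma> ffalse = False" and fv_ffalse[simp]: "fv ffalse = {}"
  by (auto simp: ffalse_def)




locale Lc = fixes \<alpha> :: "'a::finite list \<Rightarrow> 'm::{monoid_mult,finite}"
  assumes mm: "monoid_morphism \<alpha>"
begin

definition Rn :: nat where "Rn = card (UNIV :: 'm set) + 1"
definition W :: nat where "W = 2 * Rn"
definition idem :: "'m set" where "idem = idempotents (semigroup_S \<alpha>)"

definition ex :: "(int \<Rightarrow> 'a option) \<Rightarrow> int \<Rightarrow> bool" where "ex r p \<longleftrightarrow> r p \<noteq> None"
definition sg :: "(int \<Rightarrow> 'a option) \<Rightarrow> int \<Rightarrow> int \<Rightarrow> 'a list" where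
  "sg r p q = map (\<lambda>k. the (r (p + int k))) [0..<nat (q - p)]"
definition val where "val r p q = \<alpha> (sg r p q)"
definition stab :: "'m \<Rightarrow> 'm" where "stab m = (SOME e. e \<in> idem \<and> m * e = m)"
definition cut where
  "cut r b \<longleftrightarrow> ex r (b - int Rn) \<and> ex r b \<and> (\<exists>e\<in>idem. val r (b - int Rn) b * e = val r (b - int Rn) b)"
definition ec where "ec r b = stab (val r (b - int Rn) b)"
definition hasp where "hasp r b \<longleftrightarrow> (\<exists>k<W. cut r (b - int k))"
definition pc where "pc r b = b - int (if hasp r b then LEAST k. k < W \<and> cut r (b - int k) else 0)"
definition hasn where "hasn r b \<longleftrightarrow> (\<exists>k<W. cut r (b + 1 + int k))"
definition nc where "nc r b = b + 1 + int (if hasn r b then LEAST k. k < W \<and> cut r (b + 1 + int k) else 0)"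
definition lk where "lk r b = (if hasp r b then ec r (pc r b) else ec r (nc r b))"
definition sv where
  "sv r i = (if \<not> hasp r i then (if ex r (i - 1) then ec r (nc r i) else val r i (nc r i))
            else if cut r (i + 1) \<or> \<not> ex r (i + 1) then val r (pc r i) (i + 1) else ec r (pc r i))"
definition letter :: "(int \<Rightarrow> 'a option) \<Rightarrow> int \<Rightarrow> 'm bletter" where
  "letter r i = (if ex r (i - 1) then Some (lk r i) else None, sv r i,
                 if ex r (i + 1) then Some (lk r (i + 1)) else None)"

lemma ex_tr: "ex (\<lambda>d. r (t + d)) x = ex r (t + x)" by (simp add: ex_def)
lemma sg_tr: "sg (\<lambda>d. r (t + d)) p q = sg r (t + p) (t + q)" by (simp add: sg_def add.assoc)
lemma val_tr: "val (\<lambda>d. r (t + d)) p q = val r (t + p) (t + q)" by (simp add: val_def sg_tr)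
lemma cut_tr: "cut (\<lambda>d. r (t + d)) b = cut r (t + b)"
  unfolding cut_def ex_tr val_tr by (simp add: add_diff_eq)
lemma ec_tr: "ec (\<lambda>d. r (t + d)) b = ec r (t + b)"
  unfolding ec_def val_tr by (simp add: add_diff_eq)
lemma hasp_tr: "hasp (\<lambda>d. r (t + d)) b = hasp r (t + b)"
  unfolding hasp_def cut_tr by (simp add: add_diff_eq)
lemma hasn_tr: "hasn (\<lambda>d. r (t + d)) b = hasn r (t + b)"
  unfolding hasn_def cut_tr by (simp add: add.assoc)
lemma pc_tr: "pc (\<lambda>d. r (t + d)) b = pc r (t + b) - t"
  unfolding pc_def hasp_tr cut_tr by (simp add: add_diff_eq)
lemma nc_tr: "nc (\<lambda>d. r (t + d)) b = nc r (t + b) - t"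
  unfolding nc_def hasn_tr cut_tr by (simp add: add.assoc)
lemma lk_tr: "lk (\<lambda>d. r (t + d)) b = lk r (t + b)"
  unfolding lk_def hasp_tr pc_tr nc_tr ec_tr by simp
lemma sv_tr: "sv (\<lambda>d. r (t + d)) b = sv r (t + b)"
  unfolding sv_def hasp_tr pc_tr nc_tr ec_tr ex_tr val_tr cut_tr by (simp add: add.assoc add_diff_eq)
lemma letter_tr: "letter (\<lambda>d. r (t + d)) b = letter r (t + b)"
  unfolding letter_def lk_tr sv_tr ex_tr by (simp add: add.assoc add_diff_eq)

definition agree :: "(int \<Rightarrow> 'a option) \<Rightarrow> (int \<Rightarrow> 'a option) \<Rightarrow> int \<Rightarrow> int \<Rightarrow> bool" where "agree r r' lo hi \<longleftrightarrow> (\<forall>d. lo \<le> d \<and> d \<le> hi \<longrightarrow> r d = r' d)"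

lemma agree_mono: "agree r r' lo hi \<Longrightarrow> lo \<le> lo' \<Longrightarrow> hi' \<le> hi \<Longrightarrow> agree r r' lo' hi'"
  unfolding agree_def by (meson order.trans)

lemma ex_cong: "agree r r' lo hi \<Longrightarrow> lo \<le> p \<Longrightarrow> p \<le> hi \<Longrightarrow> ex r p = ex r' p"
  by (auto simp: agree_def ex_def)
lemma sg_cong: "agree r r' lo hi \<Longrightarrow> lo \<le> p \<Longrightarrow> q \<le> hi + 1 \<Longrightarrow> sg r p q = sg r' p q"
  by (auto simp: agree_def sg_def)
lemma val_cong: "agree r r' lo hi \<Longrightarrow> lo \<le> p \<Longrightarrow> q \<le> hi + 1 \<Longrightarrow> val r p q = val r' p q"
  using sg_cong by (simp add: val_def)
lemma cut_cong: "agree r r' lo hi \<Longrightarrow> lo \<le> b - int Rn \<Longrightarrow> b \<le> hi \<Longrightarrow> cut r b = cut r' b"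
  unfolding cut_def
  by (subst ex_cong[of r r' lo hi], assumption, simp, linarith)+ (simp add: val_cong[of r r' lo hi])
lemma ec_cong: "agree r r' lo hi \<Longrightarrow> lo \<le> b - int Rn \<Longrightarrow> b \<le> hi + 1 \<Longrightarrow> ec r b = ec r' b"
  unfolding ec_def by (simp add: val_cong[of r r' lo hi])

lemma cut_cong_range: assumes "agree r r' lo hi" "lo \<le> a - int Rn" "b \<le> hi"
  shows "\<forall>c. a \<le> c \<and> c \<le> b \<longrightarrow> cut r c = cut r' c"
proof (intro allI impI)
  fix c assume "a \<le> c \<and> c \<le> b"
  then show "cut r c = cut r' c" using assms by (intro cut_cong[of r r' lo hi c]) auto
qed

lemma hasp_cong: assumes "agree r r' lo hi" "lo \<le> b - int W - int Rn" "b \<le> hi"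
  shows "hasp r b = hasp r' b \<and> pc r b = pc r' b"
proof -
  have P: "\<forall>k<W. cut r (b - int k) = cut r' (b - int k)"
    using cut_cong_range[OF assms(1), of "b - int W" b] assms(2,3) by auto
  have Q: "(\<lambda>k. k < W \<and> cut r (b - int k)) = (\<lambda>k. k < W \<and> cut r' (b - int k))"
    using P by auto
  have H: "hasp r b = hasp r' b" using P unfolding hasp_def by auto
  show ?thesis using H unfolding pc_def Q by simp
qed

lemma hasn_cong: assumes "agree r r' lo hi" "lo \<le> b + 1 - int Rn" "b + int W \<le> hi"
  shows "hasn r b = hasn r' b \<and> nc r b = nc r' b"
proof -
  have P: "\<forall>k<W. cut r (b + 1 + int k) = cut r' (b + 1 + int k)"
    using cut_cong_range[OF assms(1), of "b + 1" "b + int W"] assms(2,3) by auto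
  have Q: "(\<lambda>k. k < W \<and> cut r (b + 1 + int k)) = (\<lambda>k. k < W \<and> cut r' (b + 1 + int k))"
    using P by auto
  have H: "hasn r b = hasn r' b" using P unfolding hasn_def by auto
  show ?thesis using H unfolding nc_def Q by simp
qed

lemma Rn_pos: "1 \<le> Rn" by (simp add: Rn_def)
lemma W_Rn: "Rn \<le> W" "2 * Rn = W" by (simp_all add: W_def)

lemma pc_range: "b - int W < pc r b \<and> pc r b \<le> b"
proof (cases "hasp r b")
  case True
  then have "(LEAST k. k < W \<and> cut r (b - int k)) < W"
    unfolding hasp_def by (metis (mono_tags, lifting) LeastI_ex)
  then show ?thesis using True by (simp add: pc_def)
next
  case False then show ?thesis using Rn_pos W_Rn by (simp add: pc_def)
qed

lemma nc_range: "b + 1 \<le> nc r b \<and> nc r b \<le> b + int W"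
proof (cases "hasn r b")
  case True
  then have "(LEAST k. k < W \<and> cut r (b + 1 + int k)) < W"
    unfolding hasn_def by (metis (mono_tags, lifting) LeastI_ex)
  then show ?thesis using True by (simp add: nc_def)
next
  case False then show ?thesis using Rn_pos W_Rn by (simp add: nc_def)
qed

lemma lk_cong: assumes "agree r r' lo hi" "lo \<le> b - int W - int Rn" "b + int W \<le> hi"
  shows "lk r b = lk r' b"
proof -
  have h: "hasp r b = hasp r' b \<and> pc r b = pc r' b" using hasp_cong[OF assms(1)] assms by auto
  have n: "hasn r b = hasn r' b \<and> nc r b = nc r' b" using hasn_cong[OF assms(1)] assms by auto
  have e1: "ec r (pc r b) = ec r' (pc r b)"
    using pc_range[of b r] assms by (intro ec_cong[OF assms(1)]) auto
  have e2: "ec r (nc r b) = ec r' (nc r b)"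
    using nc_range[of b r] assms by (intro ec_cong[OF assms(1)]) auto
  show ?thesis unfolding lk_def using h n e1 e2 by simp
qed

lemma sv_cong: assumes "agree r r' lo hi" "lo \<le> b - int W - int Rn" "b + int W + 1 \<le> hi"
  shows "sv r b = sv r' b"
proof -
  have h: "hasp r b = hasp r' b \<and> pc r b = pc r' b" using hasp_cong[OF assms(1)] assms by auto
  have n: "hasn r b = hasn r' b \<and> nc r b = nc r' b" using hasn_cong[OF assms(1)] assms by auto
  have e1: "ec r (pc r b) = ec r' (pc r b)"
    using pc_range[of b r] assms by (intro ec_cong[OF assms(1)]) auto
  have e2: "ec r (nc r b) = ec r' (nc r b)"
    using nc_range[of b r] assms by (intro ec_cong[OF assms(1)]) auto
  have v1: "val r b (nc r b) = val r' b (nc r b)"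
    using nc_range[of b r] assms by (intro val_cong[OF assms(1)]) auto
  have v2: "val r (pc r b) (b + 1) = val r' (pc r b) (b + 1)"
    using pc_range[of b r] assms by (intro val_cong[OF assms(1)]) auto
  have x1: "ex r (b - 1) = ex r' (b - 1)" using assms Rn_pos by (intro ex_cong[OF assms(1)]) auto
  have x2: "ex r (b + 1) = ex r' (b + 1)" using assms Rn_pos by (intro ex_cong[OF assms(1)]) auto
  have c: "cut r (b + 1) = cut r' (b + 1)" using assms by (intro cut_cong[OF assms(1)]) auto
  show ?thesis unfolding sv_def using h n e1 e2 v1 v2 x1 x2 c by simp
qed

definition D :: nat where "D = 3 * W"

lemma letter_cong: assumes "agree r r' (- int D) (int D)"
  shows "letter r 0 = letter r' 0"
proof -
  have w: "Rn \<le> W" "1 \<le> Rn" using W_Rn Rn_pos by auto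
  have "lk r 0 = lk r' 0" using w by (intro lk_cong[OF assms]) (auto simp: D_def)
  moreover have "lk r 1 = lk r' 1" using w by (intro lk_cong[OF assms]) (auto simp: D_def)
  moreover have "sv r 0 = sv r' 0" using w by (intro sv_cong[OF assms]) (auto simp: D_def)
  moreover have "ex r (-1) = ex r' (-1)" "ex r 1 = ex r' 1" using w by (intro ex_cong[OF assms]; auto simp: D_def)+
  ultimately show ?thesis unfolding letter_def by simp
qed

definition view :: "(int \<Rightarrow> 'a option) \<Rightarrow> int \<Rightarrow> 'a option list" where
  "view r i = map (\<lambda>k. r (i + int k - int D)) [0..<2 * D + 1]"
definition vr :: "'a option list \<Rightarrow> int \<Rightarrow> 'a option" where
  "vr v d = (if - int D \<le> d \<and> d \<le> int D then v ! nat (d + int D) else None)"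
definition G :: "'a option list \<Rightarrow> 'm bletter" where "G v = letter (vr v) 0"

lemma letter_view: "letter r i = G (view r i)"
proof -
  have "letter r i = letter (\<lambda>d. r (i + d)) 0" using letter_tr[of r i 0] by simp
  also have "\<dots> = letter (vr (view r i)) 0"
  proof (rule letter_cong)
    show "agree (\<lambda>d. r (i + d)) (vr (view r i)) (- int D) (int D)"
      unfolding agree_def vr_def view_def
    proof (intro allI impI)
      fix d :: int assume d: "- int D \<le> d \<and> d \<le> int D"
      then have "nat (d + int D) < 2 * D + 1" by linarith
      then show "r (i + d) = (if - int D \<le> d \<and> d \<le> int D then map (\<lambda>k. r (i + int k - int D)) [0..<2 * D + 1] ! nat (d + int D) else None)"
        using d by (simp del: upt_Suc add: nth_map[of _ "[0..<2 * D + 1]"])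
    qed
  qed
  finally show ?thesis by (simp add: G_def)
qed

end



context Lc begin

lemma alpha_app: "\<alpha> (u @ v) = \<alpha> u * \<alpha> v" and alpha_nil: "\<alpha> [] = 1"
  using mm by (auto simp: monoid_morphism_def)

lemma S_mem: "u \<noteq> [] \<Longrightarrow> \<alpha> u \<in> semigroup_S \<alpha>"
  by (auto simp: semigroup_S_def)

lemma pow_S: "u \<noteq> [] \<Longrightarrow> 1 \<le> k \<Longrightarrow> \<alpha> u ^ k \<in> semigroup_S \<alpha>"
proof -
  assume u: "u \<noteq> []" and k: "1 \<le> k"
  have "\<alpha> (concat (replicate k u)) = \<alpha> u ^ k" for k
    by (induction k) (auto simp: alpha_app alpha_nil)
  moreover have "concat (replicate k u) \<noteq> []" using u k by (cases k) auto
  ultimately show ?thesis using S_mem by metis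
qed

lemma idem_power:
  fixes t :: 'm
  shows "\<exists>k\<ge>1. t ^ k * t ^ k = t ^ k"
proof -
  let ?J = "{1..card (UNIV :: 'm set) + 1}"
  have "\<not> inj_on (\<lambda>k. t ^ k) ?J"
  proof
    assume "inj_on (\<lambda>k. t ^ k) ?J"
    then have "card ?J \<le> card (UNIV :: 'm set)" by (rule card_inj_on_le) auto
    then show False by simp
  qed
  then obtain i j where ij: "i \<in> ?J" "j \<in> ?J" "i < j" "t ^ i = t ^ j"
    unfolding inj_on_def by (metis linorder_neqE_nat)
  define p where "p = j - i"
  have p: "1 \<le> p" "j = i + p" using ij by (auto simp: p_def)
  have step: "t ^ (x + p) = t ^ x" if "i \<le> x" for x
  proof -
    have "t ^ (x + p) = t ^ (x - i) * t ^ j" using that p by (simp add: power_add[symmetric])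
    also have "\<dots> = t ^ (x - i) * t ^ i" using ij by simp
    also have "\<dots> = t ^ x" using that by (simp add: power_add[symmetric])
    finally show ?thesis .
  qed
  define m where "m = i * p"
  have mi: "i \<le> m" using p by (simp add: m_def)
  have "t ^ (m + c * p) = t ^ m" for c
  proof (induction c)
    case (Suc c)
    have "t ^ (m + Suc c * p) = t ^ ((m + c * p) + p)" by (simp add: algebra_simps)
    also have "\<dots> = t ^ (m + c * p)" using mi by (intro step) simp
    finally show ?case using Suc by simp
  qed simp
  then have "t ^ (m + i * p) = t ^ m" by blast
  then have "t ^ m * t ^ m = t ^ m" by (simp add: m_def power_add[symmetric])
  moreover have "1 \<le> m" using ij p by (simp add: m_def)
  ultimately show ?thesis by blast
qed

lemma stab_exists: assumes "x * \<alpha> u = x" "u \<noteq> []" shows "\<exists>e\<in>idem. x * e = x"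
proof -
  obtain k where k: "1 \<le> k" "\<alpha> u ^ k * \<alpha> u ^ k = \<alpha> u ^ k" using idem_power by blast
  have "x * \<alpha> u ^ k' = x" for k' by (induction k') (auto simp: mult.assoc[symmetric] assms(1) power_Suc2)
  moreover have "\<alpha> u ^ k \<in> idem" using k pow_S[OF assms(2) k(1)] by (simp add: idem_def idempotents_def)
  ultimately show ?thesis by blast
qed

lemma idem_idem: "e \<in> idem \<Longrightarrow> e * e = e" by (simp add: idem_def idempotents_def)

lemma stab_prop: "\<exists>e\<in>idem. m * e = m \<Longrightarrow> stab m \<in> idem \<and> m * stab m = m"
  unfolding stab_def by (rule someI_ex) blast

end




context Lc begin
context fixes w :: "'a list" begin

definition V :: "nat \<Rightarrow> nat \<Rightarrow> 'm" where "V a b = \<alpha> (map (nth w) [a..<b])"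

lemma V_split: "a \<le> b \<Longrightarrow> b \<le> c \<Longrightarrow> V a c = V a b * V b c"
proof -
  assume "a \<le> b" "b \<le> c"
  then have "[a..<c] = [a..<b] @ [b..<c]"
    using upt_add_eq_append[of a b "c - b"] by simp
  then show ?thesis by (simp add: V_def alpha_app)
qed

lemma V_all: "V 0 (length w) = \<alpha> w" by (simp add: V_def map_nth)

lemma V_S: "a < b \<Longrightarrow> \<exists>u. u \<noteq> [] \<and> V a b = \<alpha> u" by (auto simp: V_def intro!: exI[of _ "map (nth w) [a..<b]"])

lemma ex_get: "ex (get w) p \<longleftrightarrow> 0 \<le> p \<and> p < int (length w)"
  by (simp add: ex_def get_def)

lemma sg_get: "a \<le> b \<Longrightarrow> b \<le> length w \<Longrightarrow> sg (get w) (int a) (int b) = map (nth w) [a..<b]"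
proof -
  assume ab: "a \<le> b" "b \<le> length w"
  show ?thesis unfolding sg_def
  proof (rule nth_equalityI)
    show "length (map (\<lambda>k. the (get w (int a + int k))) [0..<nat (int b - int a)]) = length (map ((!) w) [a..<b])"
      by simp
    fix i assume "i < length (map (\<lambda>k. the (get w (int a + int k))) [0..<nat (int b - int a)])"
    then have i: "i < b - a" by simp
    then have "int a + int i < int (length w)" "nat (int a + int i) = a + i" using ab by linarith+
    then show "map (\<lambda>k. the (get w (int a + int k))) [0..<nat (int b - int a)] ! i = map ((!) w) [a..<b] ! i"
      using i by (simp add: get_def)
  qed
qed

lemma val_get: "a \<le> b \<Longrightarrow> b \<le> length w \<Longrightarrow> val (get w) (int a) (int b) = V a b"
  by (simp add: val_def V_def sg_get)

lemma val_get': "0 \<le> p \<Longrightarrow> p \<le> q \<Longrightarrow> q \<le> int (length w) \<Longrightarrow> val (get w) p q = V (nat p) (nat q)"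
  using val_get[of "nat p" "nat q"] by simp

definition C :: "nat \<Rightarrow> bool" where "C b \<longleftrightarrow> cut (get w) (int b)"

lemma C_iff: "C b \<longleftrightarrow> Rn \<le> b \<and> b < length w \<and> (\<exists>e\<in>idem. V (b - Rn) b * e = V (b - Rn) b)"
proof (cases "Rn \<le> b \<and> b < length w")
  case True
  then have "val (get w) (int b - int Rn) (int b) = V (b - Rn) b" by (subst val_get') (auto simp: nat_diff_distrib')
  then show ?thesis unfolding C_def cut_def ex_get using True by auto
next
  case False then show ?thesis unfolding C_def cut_def ex_get by auto
qed

lemma cut_nat: "cut (get w) x \<Longrightarrow> \<exists>b. x = int b \<and> C b"
proof -
  assume h: "cut (get w) x"
  then have "0 \<le> x" unfolding cut_def ex_get by linarith
  then have "x = int (nat x)" by simp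
  then show ?thesis using h unfolding C_def by metis
qed

lemma C_stab: assumes "C b" shows "ec (get w) (int b) \<in> idem" "V 0 b * ec (get w) (int b) = V 0 b"
proof -
  from assms have b: "Rn \<le> b" "b < length w" and ex: "\<exists>e\<in>idem. V (b - Rn) b * e = V (b - Rn) b"
    by (auto simp: C_iff)
  have ecv: "ec (get w) (int b) = stab (V (b - Rn) b)"
    unfolding ec_def using b by (subst val_get') (auto simp: nat_diff_distrib')
  from stab_prop[OF ex] have st: "stab (V (b - Rn) b) \<in> idem" "V (b - Rn) b * stab (V (b - Rn) b) = V (b - Rn) b" by auto
  show "ec (get w) (int b) \<in> idem" using ecv st by simp
  have "V 0 b = V 0 (b - Rn) * V (b - Rn) b" using b by (intro V_split) auto
  then show "V 0 b * ec (get w) (int b) = V 0 b" using ecv st by (simp add: mult.assoc)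
qed

lemma G1: assumes "Rn \<le> a" "a + Rn \<le> length w" shows "\<exists>b. a < b \<and> b \<le> a + Rn \<and> C b"
proof -
  let ?J = "{a+1..a+Rn}"
  have "\<not> inj_on (V a) ?J"
  proof
    assume "inj_on (V a) ?J"
    then have "card ?J \<le> card (UNIV :: 'm set)" by (rule card_inj_on_le) auto
    then show False by (simp add: Rn_def)
  qed
  then obtain j j' where jj: "j \<in> ?J" "j' \<in> ?J" "j < j'" "V a j = V a j'"
    unfolding inj_on_def by (metis linorder_neqE_nat)
  have "V a j' = V a j * V j j'" using jj by (intro V_split) auto
  then have eq: "V a j * V j j' = V a j" using jj by simp
  obtain u where u: "u \<noteq> []" "V j j' = \<alpha> u" using V_S[of j j'] jj by auto
  obtain e where e: "e \<in> idem" "V a j * e = V a j" using stab_exists[of "V a j" u] eq u by auto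
  have "V (j - Rn) j = V (j - Rn) a * V a j" using jj by (intro V_split) auto
  then have "V (j - Rn) j * e = V (j - Rn) j" using e by (simp add: mult.assoc)
  moreover have "Rn \<le> j" "j < length w" using jj assms by auto
  ultimately have "C j" using e by (auto simp: C_iff)
  then show ?thesis using jj by (intro exI[of _ j]) auto
qed


context assumes long: "W \<le> length w" begin

definition b1 where "b1 = (LEAST b. C b)"

lemma b1: "C b1" "b1 \<le> W" "Rn \<le> b1" "b1 < length w" "c < b1 \<Longrightarrow> \<not> C c"
proof -
  obtain b where b: "Rn < b" "b \<le> Rn + Rn" "C b" using G1[of Rn] long W_Rn by auto
  show c: "C b1" unfolding b1_def using b by (metis LeastI)
  have "b1 \<le> b" unfolding b1_def using b by (metis Least_le)
  then show "b1 \<le> W" using b W_Rn by simp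
  show "Rn \<le> b1" "b1 < length w" using c by (auto simp: C_iff)
  show "c < b1 \<Longrightarrow> \<not> C c" unfolding b1_def by (rule not_less_Least)
qed

definition pcf where "pcf k = (GREATEST c. C c \<and> c \<le> k)"

lemma pcf: assumes "b1 \<le> k" shows "C (pcf k)" "pcf k \<le> k" "C c \<Longrightarrow> c \<le> k \<Longrightarrow> c \<le> pcf k"
proof -
  have P: "C b1 \<and> b1 \<le> k" using b1 assms by auto
  have "C (pcf k) \<and> pcf k \<le> k" unfolding pcf_def
    by (rule GreatestI_nat[of _ b1 k]) (use P in auto)
  then show "C (pcf k)" "pcf k \<le> k" by auto
  show "C c \<Longrightarrow> c \<le> k \<Longrightarrow> c \<le> pcf k" unfolding pcf_def
    by (rule Greatest_le_nat[of _ c k]) auto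
qed

lemma pcf_near: assumes "b1 \<le> k" "k < length w" shows "k < pcf k + Rn"
proof (rule ccontr)
  assume "\<not> k < pcf k + Rn"
  moreover have "Rn \<le> pcf k" using pcf(1)[OF assms(1)] by (simp add: C_iff)
  ultimately obtain b where b: "pcf k < b" "b \<le> pcf k + Rn" "C b" using G1[of "pcf k"] assms by auto
  then have "b \<le> pcf k" using pcf(3)[OF assms(1), of b] \<open>\<not> k < pcf k + Rn\<close> by auto
  then show False using b by simp
qed

lemma pc_char: assumes "C c" "c \<le> k" "k < c + W" "\<And>c'. c < c' \<Longrightarrow> c' \<le> k \<Longrightarrow> \<not> C c'"
  shows "hasp (get w) (int k) \<and> pc (get w) (int k) = int c"
proof -
  have P: "k - c < W \<and> cut (get w) (int k - int (k - c))" using assms by (auto simp: C_def)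
  then have H: "hasp (get w) (int k)" unfolding hasp_def by blast
  have "(LEAST j. j < W \<and> cut (get w) (int k - int j)) = k - c"
  proof (rule Least_equality)
    show "k - c < W \<and> cut (get w) (int k - int (k - c))" by (rule P)
    fix y assume y: "y < W \<and> cut (get w) (int k - int y)"
    show "k - c \<le> y"
    proof (rule ccontr)
      assume "\<not> k - c \<le> y"
      then have e: "int k - int y = int (k - y)" and "c < k - y" "k - y \<le> k" by auto
      moreover have "C (k - y)" using y unfolding C_def e by simp
      ultimately show False using assms(4) by blast
    qed
  qed
  then show ?thesis using H assms(2) by (simp add: pc_def)
qed

lemma hp_big: assumes "b1 \<le> k" "k < length w"
  shows "hasp (get w) (int k) \<and> pc (get w) (int k) = int (pcf k)"
proof (rule pc_char)
  show "C (pcf k)" "pcf k \<le> k" using pcf assms by auto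
  show "k < pcf k + W" using pcf_near[OF assms] W_Rn by simp
  fix c' assume "pcf k < c'" "c' \<le> k"
  then show "\<not> C c'" using pcf(3)[OF assms(1), of c'] by auto
qed

lemma hp_small: assumes "k < b1"
  shows "\<not> hasp (get w) (int k) \<and> nc (get w) (int k) = int b1"
proof -
  have "\<not> cut (get w) (int k - int j)" for j
  proof
    assume "cut (get w) (int k - int j)"
    then obtain b where "int k - int j = int b" "C b" using cut_nat by blast
    then show False using b1(5)[of b] assms by linarith
  qed
  then have NH: "\<not> hasp (get w) (int k)" unfolding hasp_def by blast
  have P: "b1 - k - 1 < W \<and> cut (get w) (int k + 1 + int (b1 - k - 1))"
    using b1 assms by (auto simp: C_def of_nat_diff)
  then have HN: "hasn (get w) (int k)" unfolding hasn_def by blast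
  have "(LEAST j. j < W \<and> cut (get w) (int k + 1 + int j)) = b1 - k - 1"
  proof (rule Least_equality)
    show "b1 - k - 1 < W \<and> cut (get w) (int k + 1 + int (b1 - k - 1))" by (rule P)
    fix y assume y: "y < W \<and> cut (get w) (int k + 1 + int y)"
    show "b1 - k - 1 \<le> y"
    proof (rule ccontr)
      assume "\<not> b1 - k - 1 \<le> y"
      then have e: "int k + 1 + int y = int (k + 1 + y)" and "k + 1 + y < b1" by auto
      moreover have "C (k + 1 + y)" using y unfolding C_def e by simp
      ultimately show False using b1(5) by blast
    qed
  qed
  then show ?thesis using NH HN assms by (simp add: nc_def)
qed

definition tg where "tg b = (if b < b1 then b1 else pcf b)"

lemma tg_C: "C (tg b)"
  using b1 pcf by (auto simp: tg_def)

lemma lk_tg: assumes "b < length w" shows "lk (get w) (int b) = ec (get w) (int (tg b))"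
proof (cases "b < b1")
  case True then show ?thesis using hp_small[OF True] by (simp add: lk_def tg_def)
next
  case False then show ?thesis using hp_big[of b] assms by (simp add: lk_def tg_def)
qed

lemma pcf_C: assumes "C k" shows "pcf k = k"
proof -
  have "b1 \<le> k" using assms b1(5) by (meson not_le)
  then show ?thesis using pcf[of k] assms by (meson le_antisym order_refl)
qed

lemma pcf_suc: assumes "b1 \<le> k" "\<not> C (k + 1)" shows "pcf (k + 1) = pcf k"
proof -
  have a1: "b1 \<le> k + 1" using assms by simp
  have "pcf (k + 1) \<le> pcf k" using pcf(1,2)[OF a1] pcf(3)[OF assms(1)] assms(2)
    by (metis Suc_eq_plus1 le_SucE)
  moreover have "pcf k \<le> pcf (k + 1)" using pcf(1,2)[OF assms(1)] pcf(3)[OF a1] by simp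
  ultimately show ?thesis by simp
qed

lemma letter_k: assumes "k < length w"
  shows "letter (get w) (int k) = (if 1 \<le> k then Some (ec (get w) (int (tg k))) else None, sv (get w) (int k),
           if k + 1 < length w then Some (ec (get w) (int (tg (k + 1)))) else None)"
proof -
  have e: "int k + 1 = int (k + 1)" by simp
  have "lk (get w) (int (k + 1)) = ec (get w) (int (tg (k + 1)))" if "k + 1 < length w"
    using lk_tg[OF that] by simp
  then show ?thesis unfolding letter_def e using assms lk_tg[OF assms] by (auto simp only: ex_get) auto
qed

lemma sv_small: assumes "k < b1" shows "sv (get w) (int k) = (if 1 \<le> k then ec (get w) (int b1) else V 0 b1)"
proof -
  have "val (get w) 0 (int b1) = V 0 b1" using b1 by (subst val_get') auto
  then show ?thesis using hp_small[OF assms] b1 assms by (cases k) (auto simp: sv_def ex_get)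
qed

lemma sv_big: assumes "b1 \<le> k" "k < length w"
  shows "sv (get w) (int k) = (if C (k + 1) \<or> k + 1 = length w then V (pcf k) (k + 1) else ec (get w) (int (pcf k)))"
proof -
  have "val (get w) (int (pcf k)) (int k + 1) = V (pcf k) (k + 1)" using pcf[OF assms(1)] assms
    by (subst val_get') (auto simp: nat_add_distrib)
  moreover have "cut (get w) (int k + 1) = C (k + 1)" by (simp add: C_def add.commute)
  ultimately show ?thesis using hp_big[OF assms] assms by (auto simp: sv_def ex_get)
qed

definition P where "P k = prod_list (map (\<lambda>i. beta_letter (letter (get w) (int i))) [0..<k])"

lemma P_Suc: "P (Suc k) = P k * beta_letter (letter (get w) (int k))"
  by (simp add: P_def)

lemma tg_b1: "tg b1 = b1" using pcf_C[OF b1(1)] by (simp add: tg_def)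

lemma tg_le: "b1 \<le> k \<Longrightarrow> tg k = pcf k" by (simp add: tg_def)

lemma P_1: "P 1 = V 0 (tg 1)"
proof -
  have n: "1 < length w" using long W_Rn Rn_pos by simp
  have b0: "0 < b1" using b1(3) Rn_pos by simp
  have t1: "tg 1 = b1"
  proof (cases "1 < b1")
    case True then show ?thesis by (simp add: tg_def)
  next
    case False then have "1 = b1" using b0 by simp
    then show ?thesis using tg_b1 by simp
  qed
  have "letter (get w) (int 0) = (None, V 0 b1, Some (ec (get w) (int b1)))"
    using letter_k[of 0] n sv_small[OF b0] t1 by (cases w) auto
  then have "P 1 = V 0 b1 * ec (get w) (int b1)" by (simp add: P_def)
  also have "\<dots> = V 0 b1" using C_stab(2)[OF b1(1)] .
  finally show ?thesis using t1 by simp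
qed

lemma P_step: assumes k: "1 \<le> k" "k < length w" and IH: "P k = V 0 (tg k)"
  shows "P (Suc k) = (if Suc k < length w then V 0 (tg (Suc k)) else \<alpha> w)"
proof -
  define c where "c = tg k"
  define e where "e = ec (get w) (int c)"
  have eC: "e \<in> idem" "V 0 c * e = V 0 c" using C_stab[OF tg_C[of k]] by (auto simp: e_def c_def)
  have ee: "e * e = e" using idem_idem[OF eC(1)] .
  have L: "letter (get w) (int k) = (Some e, sv (get w) (int k),
           if k + 1 < length w then Some (ec (get w) (int (tg (k + 1)))) else None)"
    using letter_k[OF k(2)] k(1) by (simp add: e_def c_def)
  show ?thesis
  proof (cases "k < b1")
    case True
    have c: "c = b1" using True by (simp add: c_def tg_def)
    have n: "k + 1 < length w" using True b1(4) by simp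
    have t: "tg (k + 1) = b1"
    proof (cases "k + 1 < b1")
      case True then show ?thesis by (simp add: tg_def)
    next
      case False then have "k + 1 = b1" using \<open>k < b1\<close> by simp
      then show ?thesis using tg_b1 by simp
    qed
    have sv: "sv (get w) (int k) = e" using sv_small[OF True] k c by (simp add: e_def)
    have "P (Suc k) = V 0 c * (e * e * e)" using L sv n t c by (simp add: P_Suc IH c_def e_def)
    also have "\<dots> = V 0 c" using ee eC by (simp add: mult.assoc)
    finally show ?thesis using n t c by simp
  next
    case False
    then have kb: "b1 \<le> k" by simp
    have c: "c = pcf k" using kb by (simp add: c_def tg_le)
    have ck: "c \<le> k" using pcf(2)[OF kb] c by simp
    show ?thesis
    proof (cases "k + 1 = length w")
      case True
      have sv: "sv (get w) (int k) = V c (k + 1)" using sv_big[OF kb k(2)] True c by simp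
      have "P (Suc k) = V 0 c * (e * V c (k + 1))" unfolding P_Suc IH using L sv True by (simp add: c_def)
      also have "\<dots> = V 0 c * V c (k + 1)" using eC by (simp add: mult.assoc[symmetric])
      also have "\<dots> = V 0 (k + 1)" using ck by (intro V_split[symmetric]) auto
      finally show ?thesis using True V_all by simp
    next
      case False
      then have n: "k + 1 < length w" using k by simp
      show ?thesis
      proof (cases "C (k + 1)")
        case True
        have sv: "sv (get w) (int k) = V c (k + 1)" using sv_big[OF kb k(2)] True c by simp
        have t: "tg (k + 1) = k + 1" using pcf_C[OF True] kb by (simp add: tg_le)
        define f where "f = ec (get w) (int (k + 1))"
        have fC: "V 0 (k + 1) * f = V 0 (k + 1)" using C_stab(2)[OF True] by (simp add: f_def)
        have "P (Suc k) = V 0 c * (e * V c (k + 1) * f)" using L sv n t by (simp add: P_Suc IH c_def f_def)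
        also have "\<dots> = (V 0 c * V c (k + 1)) * f" using eC by (simp add: mult.assoc[symmetric])
        also have "\<dots> = V 0 (k + 1) * f" using ck by (simp add: V_split[symmetric])
        also have "\<dots> = V 0 (k + 1)" by (rule fC)
        finally show ?thesis using n t by simp
      next
        case False
        have sv: "sv (get w) (int k) = e" using sv_big[OF kb k(2)] False \<open>k + 1 \<noteq> length w\<close> c
          by (simp add: e_def)
        have t: "tg (k + 1) = c" using pcf_suc[OF kb False] kb c by (simp add: tg_le)
        have "P (Suc k) = V 0 c * (e * e * e)" using L sv n t by (simp add: P_Suc IH c_def e_def)
        also have "\<dots> = V 0 c" using ee eC by (simp add: mult.assoc)
        finally show ?thesis using n t by simp
      qed
    qed
  qed
qed

lemma P_inv: "1 \<le> k \<Longrightarrow> k < length w \<Longrightarrow> P k = V 0 (tg k)"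
proof (induction k)
  case 0 then show ?case by simp
next
  case (Suc k)
  show ?case
  proof (cases "k = 0")
    case True then show ?thesis using P_1 by simp
  next
    case False
    then have "P k = V 0 (tg k)" using Suc by simp
    then show ?thesis using P_step[of k] False Suc.prems by simp
  qed
qed

lemma P_all: "P (length w) = \<alpha> w"
proof -
  have two: "2 \<le> length w" using long W_Rn(2) Rn_pos by linarith
  then obtain m where m: "length w = Suc m" "1 \<le> m" by (cases "length w") auto
  have n: "m < length w" using m by simp
  have "P (Suc m) = \<alpha> w" using P_step[OF m(2) n P_inv[OF m(2) n]] m by simp
  then show ?thesis using m by simp
qed

lemma letters_ok: assumes "k < length w"
  shows "fst (letter (get w) (int k)) = (if 1 \<le> k then Some (ec (get w) (int (tg k))) else None)"
    "snd (snd (letter (get w) (int k))) = (if k + 1 < length w then Some (ec (get w) (int (tg (k + 1)))) else None)"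
  using letter_k[OF assms] by simp_all

lemma ec_tg_idem: "ec (get w) (int (tg k)) \<in> idem" using C_stab(1)[OF tg_C] .

end

end
end



context Lc begin

definition eta' :: "'a list \<Rightarrow> 'm bletter list" where
  "eta' w = map (\<lambda>i. letter (get w) (int i)) [0..<length w]"
definition eta :: "'a list \<Rightarrow> 'm bletter list" where
  "eta w = (if length w < W then [(None, \<alpha> w, None)] else eta' w)"

lemma Bset_idem: "Bset \<alpha> = {(e, s, f). e \<in> insert None (Some ` idem) \<and> f \<in> insert None (Some ` idem)}"
  by (simp add: Bset_def idem_def)

lemma eta'_props: assumes long: "W \<le> length w"
  shows "eta' w \<in> lists (Bset \<alpha>)" "well_formed \<alpha> (eta' w)" "\<alpha> w = beta (eta' w)"
proof -
  have two: "2 \<le> length w" using long W_Rn(2) Rn_pos by linarith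
  have lo: "fst (eta' w ! k) = (if 1 \<le> k then Some (ec (get w) (int (tg w k))) else None)"
    "snd (snd (eta' w ! k)) = (if k + 1 < length w then Some (ec (get w) (int (tg w (k + 1)))) else None)"
    if "k < length w" for k
    using letters_ok[OF long that] that by (simp_all add: eta'_def)
  show "eta' w \<in> lists (Bset \<alpha>)"
  proof (rule in_listsI, rule ballI)
    fix x assume "x \<in> set (eta' w)"
    then obtain k where k: "k < length w" "x = eta' w ! k" by (auto simp: in_set_conv_nth eta'_def)
    obtain a b c where x: "x = (a, b, c)" using prod_cases3 by blast
    have "a = fst (eta' w ! k)" "c = snd (snd (eta' w ! k))" using x k by auto
    then have "a \<in> insert None (Some ` idem)" "c \<in> insert None (Some ` idem)"
      using lo[OF k(1)] ec_tg_idem[OF long] by auto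
    then show "x \<in> Bset \<alpha>" using x by (simp add: Bset_idem)
  qed
  show "well_formed \<alpha> (eta' w)"
    unfolding well_formed_def
  proof (intro conjI allI impI)
    show "eta' w \<noteq> []" using two by (auto simp: eta'_def)
    show "fst (eta' w ! 0) = None" using lo(1)[of 0] two by (cases w) auto
    have l: "length (eta' w) = length w" by (simp add: eta'_def)
    have "length w - 1 < length w" "\<not> length w - 1 + 1 < length w" using two by auto
    then show "snd (snd (eta' w ! (length (eta' w) - 1))) = None" using lo(2)[of "length w - 1"]
      unfolding l by simp
    fix i assume "i < length (eta' w) - 1"
    then have i: "i + 1 < length w" by (simp add: eta'_def)
    show "snd (snd (eta' w ! i)) = fst (eta' w ! (i + 1))" using lo[of i] lo[of "i + 1"] i by simp
    show "snd (snd (eta' w ! i)) \<in> Some ` idempotents (semigroup_S \<alpha>)"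
      using lo[of i] i ec_tg_idem[OF long] by (simp add: idem_def)
  qed
  have "beta (eta' w) = P w (length w)"
    by (simp add: beta_def eta'_def P_def[OF long] o_def)
  then show "\<alpha> w = beta (eta' w)" using P_all[OF long] by simp
qed

lemma eta_props: "eta w \<in> lists (Bset \<alpha>) \<and> well_formed \<alpha> (eta w) \<and> \<alpha> w = beta (eta w)"
proof (cases "length w < W")
  case True
  then show ?thesis by (simp add: eta_def Bset_idem well_formed_def beta_def)
next
  case False then show ?thesis using eta'_props[of w] by (simp add: eta_def)
qed

definition viewf :: "fo2var \<Rightarrow> 'a option list \<Rightarrow> 'a fo2" where
  "viewf z v = ands z (map (\<lambda>k. chk z (int k - int D) (v ! k)) [0..<2 * D + 1])"

definition Vset :: "'m bletter \<Rightarrow> 'a option list set" where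
  "Vset c = {v. length v = 2 * D + 1 \<and> G v = c}"

lemma Vset_fin: "finite (Vset c)"
proof -
  have "Vset c \<subseteq> {xs. set xs \<subseteq> UNIV \<and> length xs = 2 * D + 1}" by (auto simp: Vset_def)
  moreover have "finite {xs :: 'a option list. set xs \<subseteq> UNIV \<and> length xs = 2 * D + 1}"
    by (rule finite_lists_length_eq) simp
  ultimately show ?thesis by (rule finite_subset)
qed

definition Vl :: "'m bletter \<Rightarrow> 'a option list list" where "Vl c = (SOME l. set l = Vset c)"

lemma Vl_set: "set (Vl c) = Vset c"
  unfolding Vl_def using finite_list[OF Vset_fin] by (rule someI_ex)

definition letf :: "'m bletter \<Rightarrow> fo2var \<Rightarrow> 'a fo2" where
  "letf c z = ors (Neg (Eq z z)) (map (viewf z) (Vl c))"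

lemma sat_viewf: assumes "\<sigma> z < length w" "length v = 2 * D + 1"
  shows "sat w \<sigma> (viewf z v) = (view (get w) (int (\<sigma> z)) = v)"
proof -
  have "sat w \<sigma> (viewf z v) = (\<forall>k<2 * D + 1. get w (int (\<sigma> z) + (int k - int D)) = v ! k)"
    using assms(1) by (auto simp del: upt_Suc simp: viewf_def sat_ands chk_sat)
  also have "\<dots> = (view (get w) (int (\<sigma> z)) = v)"
    using assms(2) by (auto simp del: upt_Suc simp: view_def list_eq_iff_nth_eq add_diff_eq)
  finally show ?thesis .
qed

lemma sat_letf: assumes "\<sigma> z < length w"
  shows "sat w \<sigma> (letf c z) = (letter (get w) (int (\<sigma> z)) = c)"
proof -
  have lv: "length (view (get w) (int (\<sigma> z))) = 2 * D + 1" by (simp add: view_def)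
  have "sat w \<sigma> (letf c z) = (\<exists>v\<in>Vset c. sat w \<sigma> (viewf z v))"
    by (auto simp: letf_def sat_ors Vl_set)
  also have "\<dots> = (\<exists>v\<in>Vset c. view (get w) (int (\<sigma> z)) = v)"
    using assms by (auto simp: Vset_def sat_viewf)
  also have "\<dots> = (G (view (get w) (int (\<sigma> z))) = c)"
    using lv by (auto simp: Vset_def)
  finally show ?thesis by (simp add: letter_view[symmetric])
qed

lemma fv_viewf: "fv (viewf z v) \<subseteq> {z}"
  unfolding viewf_def by (rule fv_ands) (auto simp del: upt_Suc dest: set_mp[OF fv_chk])

lemma fv_letf: "fv (letf c z) \<subseteq> {z}"
  unfolding letf_def
proof (rule fv_ors)
  show "\<forall>\<phi>\<in>set (map (viewf z) (Vl c)). fv \<phi> \<subseteq> {z}"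
    using fv_viewf by auto
qed simp

lemma trans_eta': assumes "fv \<phi> = {}"
  shows "sat w (\<lambda>_. 0) (trans letf \<phi>) = sat (eta' w) (\<lambda>_. 0) \<phi>"
proof (rule trans_sat)
  show "length (eta' w) = length w" by (simp add: eta'_def)
  fix c x and \<sigma> :: "fo2var \<Rightarrow> nat" assume "\<sigma> x < length w"
  then show "sat w \<sigma> (letf c x) = (eta' w ! \<sigma> x = c)" by (simp add: sat_letf eta'_def)
qed (use assms in auto)

end

theorem lemma3:
  fixes \<alpha> :: "'a::finite list \<Rightarrow> 'm::{monoid_mult, finite}"
  assumes "monoid_morphism \<alpha>"
  shows "\<exists>\<eta> :: 'a list \<Rightarrow> 'm bletter list.
           (\<forall>w. \<eta> w \<in> lists (Bset \<alpha>) \<and> well_formed \<alpha> (\<eta> w) \<and> \<alpha> w = beta (\<eta> w))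
         \<and> (\<forall>K. K \<subseteq> lists (Bset \<alpha>) \<and> FO2_lt_definable (Bset \<alpha>) K
                \<longrightarrow> FO2_lt_succ_definable (UNIV :: 'a set) {w. \<eta> w \<in> K})"
proof -
  interpret Lc \<alpha> by unfold_locales (rule assms)
  show ?thesis
  proof (rule exI[of _ eta], rule conjI)
    show "\<forall>w. eta w \<in> lists (Bset \<alpha>) \<and> well_formed \<alpha> (eta w) \<and> \<alpha> w = beta (eta w)"
      using eta_props by blast
  next
    show "\<forall>K. K \<subseteq> lists (Bset \<alpha>) \<and> FO2_lt_definable (Bset \<alpha>) K
                \<longrightarrow> FO2_lt_succ_definable (UNIV :: 'a set) {w. eta w \<in> K}"
    proof (intro allI impI)
    fix K assume K: "K \<subseteq> lists (Bset \<alpha>) \<and> FO2_lt_definable (Bset \<alpha>) K"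
    then obtain \<phi> where \<phi>: "sentence (Bset \<alpha>) \<phi>" "K = lang (Bset \<alpha>) \<phi>"
      unfolding FO2_lt_definable_def by blast
    have fv\<phi>: "fv \<phi> = {}" using \<phi>(1) by (simp add: sentence_def)
    define F where "F = {w :: 'a list. length w < W \<and> [(None, \<alpha> w, None)] \<in> K}"
    have "F \<subseteq> {xs. set xs \<subseteq> UNIV \<and> length xs \<le> W}" by (auto simp: F_def)
    moreover have "finite {xs :: 'a list. set xs \<subseteq> UNIV \<and> length xs \<le> W}"
      by (rule finite_lists_length_le) simp
    ultimately have finF: "finite F" by (rule finite_subset)
    obtain Fl where Fl: "set Fl = F" using finite_list[OF finF] by blast
    define \<psi> where "\<psi> = Or (ors ffalse (map exact Fl)) (And (geq W) (trans letf \<phi>))"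
    have fv1: "fv (ors ffalse (map exact Fl)) \<subseteq> {}"
      by (rule fv_ors) (auto simp: fv_exact)
    have fv2: "fv (trans letf \<phi>) \<subseteq> {}" using fv_trans[of letf \<phi>] fv_letf fv\<phi> by auto
    have sent: "sentence UNIV \<psi>" unfolding sentence_def \<psi>_def using fv1 fv2 fv_geq by auto
    have W1: "1 \<le> W" using W_Rn Rn_pos by linarith
    have "sat w (\<lambda>_. 0) \<psi> \<longleftrightarrow> eta w \<in> K" for w
    proof -
      have "sat w (\<lambda>_. 0) \<psi> \<longleftrightarrow> w \<in> F \<or> (W \<le> length w \<and> sat (eta' w) (\<lambda>_. 0) \<phi>)"
        unfolding \<psi>_def using Fl by (auto simp: sat_ors sat_exact sat_geq[OF W1] trans_eta'[OF fv\<phi>])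
      also have "\<dots> \<longleftrightarrow> eta w \<in> K"
      proof (cases "length w < W")
        case True then show ?thesis by (simp add: eta_def F_def)
      next
        case False
        then have "eta' w \<in> lists (Bset \<alpha>)" using eta'_props(1)[of w] by simp
        then show ?thesis using False by (simp add: eta_def F_def \<phi>(2) lang_def)
      qed
      finally show ?thesis .
    qed
    then have "lang UNIV \<psi> = {w. eta w \<in> K}" by (auto simp: lang_def)
    then show "FO2_lt_succ_definable (UNIV :: 'a set) {w. eta w \<in> K}"
      unfolding FO2_lt_succ_definable_def using sent by blast
    qed
  qed
qed



end
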